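(* Let $p\in(0,1]$ and let $f:\mathbb{Z}\to\mathbb{R}$ belong to $\ell^p(\mathbb{Z})$. Then $${\rm Var}_p Mf\leq \left(2\sum_{k=0}^{\infty}\frac{2^{p}}{(2k+1)^p(2k+3)^p}\right)^{1/p}\|f\|_{\ell^p(\mathbb{Z})}=:\mathbf{C}_p\|f\|_{\ell^p(\mathbb{Z})},$$ and the constant $\mathbf{C}_p$ is the best possible. Moreover, for $p\in(\frac12,1]$, a function $f\not\equiv 0$ attains equality if and only if $f$ is a delta function, i.e. $f=c\,\mathbf{1}_{\{m\}}$ for some $m\in\mathbb{Z}$ and $c\neq 0$.
   Context: For $f:\mathbb{Z}\to\mathbb{R}$, the centered discrete Hardy–Littlewood maximal function is $Mf(n)=\sup_{r\ge 0}\frac{1}{2r+1}\sum_{k=-r}^{r}|f(n+k)|$ ($r$ integer). $\|f\|_{\ell^p(\mathbb{Z})}=(\sum_{n\in\mathbb{Z}}|f(n)|^p)^{1/p}$ and ${\rm Var}_p g=\left(\sum_{n\in\mathbb{Z}}|g(n+1)-g(n)|^p\right)^{1/p}$. *)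

theory Defs
  imports "HOL-Analysis.Analysis"
begin

definition maxfun :: "(int \<Rightarrow> real) \<Rightarrow> int \<Rightarrow> real" where
  "maxfun f n = (SUP r::nat. (\<Sum>k\<in>{- int r..int r}. \<bar>f (n + k)\<bar>) / (2 * real r + 1))"

definition in_lp :: "real \<Rightarrow> (int \<Rightarrow> real) \<Rightarrow> bool" where
  "in_lp p f \<longleftrightarrow> (\<lambda>n. \<bar>f n\<bar> powr p) summable_on UNIV"

definition lpnorm :: "real \<Rightarrow> (int \<Rightarrow> real) \<Rightarrow> real" where
  "lpnorm p f = (\<Sum>\<^sub>\<infinity>n. \<bar>f n\<bar> powr p) powr (1 / p)"

definition varp :: "real \<Rightarrow> (int \<Rightarrow> real) \<Rightarrow> ereal" where
  "varp p g = (if (\<lambda>n. \<bar>g (n + 1) - g n\<bar> powr p) summable_on UNIV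
               then ereal ((\<Sum>\<^sub>\<infinity>n. \<bar>g (n + 1) - g n\<bar> powr p) powr (1 / p))
               else \<infinity>)"

text \<open>The constant C_p, equal to \<infinity> when the series diverges (i.e. p \<le> 1/2).\<close>
definition Cp :: "real \<Rightarrow> ereal" where
  "Cp p = (let a = (\<lambda>k::nat. 2 powr p / ((2 * real k + 1) powr p * (2 * real k + 3) powr p))
           in if summable a then ereal ((2 * suminf a) powr (1 / p)) else \<infinity>)"

end

theory Submission
  imports Defs
begin


lemma powr_subadd:
  fixes a b p :: real
  assumes "0 < p" "p \<le> 1" "0 \<le> a" "0 \<le> b"
  shows "(a + b) powr p \<le> a powr p + b powr p"
proof (cases "a + b = 0")
  case True then show ?thesis using assms by simp
next
  case False
  hence s: "a + b > 0" using assms by simp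
  have ha: "a / (a+b) \<le> (a/(a+b)) powr p"
    using powr_mono'[of p 1 "a/(a+b)"] assms s by simp
  have hb: "b / (a+b) \<le> (b/(a+b)) powr p"
    using powr_mono'[of p 1 "b/(a+b)"] assms s by simp
  have "1 = a/(a+b) + b/(a+b)" using s by (simp add: add_divide_distrib[symmetric])
  also have "\<dots> \<le> (a powr p + b powr p) / (a+b) powr p"
    using ha hb assms s by (simp add: powr_divide add_divide_distrib)
  finally show ?thesis using s by (simp add: field_simps)
qed

lemma powr_sum_le:
  fixes p :: real
  assumes "0 < p" "p \<le> 1" "finite A" "\<And>x. x \<in> A \<Longrightarrow> 0 \<le> g x"
  shows "(sum g A) powr p \<le> (\<Sum>x\<in>A. g x powr p)"
  using assms(3,4)
proof (induction A rule: finite_induct)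
  case empty then show ?case by simp
next
  case (insert x F)
  have "(sum g (insert x F)) powr p = (g x + sum g F) powr p" using insert by simp
  also have "\<dots> \<le> g x powr p + (sum g F) powr p"
    by (rule powr_subadd) (use assms insert in \<open>auto intro: sum_nonneg\<close>)
  also have "\<dots> \<le> g x powr p + (\<Sum>x\<in>F. g x powr p)" using insert by simp
  finally show ?case using insert by simp
qed

definition cc :: "nat \<Rightarrow> real" where "cc k = 2 / ((2*real k+1)*(2*real k+3))"
definition dd :: "int \<Rightarrow> nat" where "dd j = (if 0 \<le> j then nat j else nat (-j-1))"
definition ww :: "real \<Rightarrow> int \<Rightarrow> real" where "ww p j = cc (dd j) powr p"

lemma cc_pos: "0 < cc k" by (simp add: cc_def)

lemma cc_le1: "cc k \<le> 1"
proof -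
  have "(2::real) \<le> (2*real k+1)*(2*real k+3)"
    using mult_mono[of 1 "2*real k+1" 3 "2*real k+3"] by simp
  thus ?thesis by (simp add: cc_def)
qed

lemma cc_strict: "k < l \<Longrightarrow> cc l < cc k"
  unfolding cc_def by (rule divide_strict_left_mono) (auto intro!: mult_strict_mono simp: add_pos_pos)

lemma cc_mono: "k \<le> l \<Longrightarrow> cc l \<le> cc k"
  using cc_strict[of k l] by (cases "k = l") auto

lemma cc_diff: "1 / (2 * real r + 1) - 1 / (2 * real r + 3) = cc r"
  by (simp add: cc_def field_simps)

lemma ww_nonneg: "0 \<le> ww p j" by (simp add: ww_def)
lemma ww_le1: "0 < p \<Longrightarrow> ww p j \<le> 1"
  unfolding ww_def using cc_le1 cc_pos by (simp add: powr_le1 less_imp_le)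

lemma a_eq: "2 powr p / ((2 * real k + 1) powr p * (2 * real k + 3) powr p) = cc k powr p"
  by (simp add: cc_def powr_divide powr_mult)

lemma Cp_eq: "Cp p = (if summable (\<lambda>k. cc k powr p) then ereal ((2 * suminf (\<lambda>k. cc k powr p)) powr (1/p)) else \<infinity>)"
  unfolding Cp_def Let_def a_eq by simp

lemma ww_has_sum:
  assumes "summable (\<lambda>k. cc k powr p)"
  shows "(ww p has_sum (2 * suminf (\<lambda>k. cc k powr p))) UNIV"
proof -
  define s where "s = suminf (\<lambda>k. cc k powr p)"
  have h: "((\<lambda>k. cc k powr p) has_sum s) UNIV"
    using assms unfolding s_def by (intro sums_nonneg_imp_has_sum) (auto simp: summable_sums)
  have b1: "bij_betw (\<lambda>k::nat. int k) UNIV {j. 0 \<le> j}"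
    by (rule bij_betw_byWitness[where f'=nat]) auto
  have h1: "(ww p has_sum s) {j. 0 \<le> j}"
    using h has_sum_reindex_bij_betw[OF b1, of "ww p" s] by (simp add: ww_def dd_def)
  have b2: "bij_betw (\<lambda>k::nat. - int k - 1) UNIV {j. j < 0}"
    by (rule bij_betw_byWitness[where f'="\<lambda>j. nat (-j-1)"]) auto
  have h2: "(ww p has_sum s) {j. j < 0}"
    using h has_sum_reindex_bij_betw[OF b2, of "ww p" s] by (simp add: ww_def dd_def)
  have "(ww p has_sum (s + s)) ({j. 0 \<le> j} \<union> {j. j < 0})"
    by (rule has_sum_Un_disjoint[OF h1 h2]) auto
  moreover have "{j::int. 0 \<le> j} \<union> {j. j < 0} = UNIV" by auto
  ultimately show ?thesis by (simp add: s_def)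
qed

lemma ww_summable_imp:
  assumes "ww p summable_on UNIV"
  shows "summable (\<lambda>k. cc k powr p)"
proof -
  have b1: "bij_betw (\<lambda>k::nat. int k) UNIV {j. 0 \<le> j}"
    by (rule bij_betw_byWitness[where f'=nat]) auto
  have "ww p summable_on {j. 0 \<le> j}"
    using assms by (rule summable_on_subset) auto
  hence "(\<lambda>k. ww p (int k)) summable_on UNIV"
    using b1 by (simp add: summable_on_def has_sum_reindex_bij_betw)
  hence "(\<lambda>k. cc k powr p) summable_on UNIV" by (simp add: ww_def dd_def)
  thus ?thesis by (rule summable_on_imp_summable)
qed

lemma shift_has_sum:
  "((\<lambda>n. g (n - m)) has_sum S) (UNIV::int set) \<longleftrightarrow> (g has_sum S) UNIV"
proof -
  have b: "bij_betw (\<lambda>n::int. n - m) UNIV UNIV"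
    by (rule bij_betw_byWitness[where f'="\<lambda>j. j + m"]) auto
  show ?thesis using has_sum_reindex_bij_betw[OF b, of g S] by simp
qed

lemma summable_pgt:
  assumes "1/2 < p"
  shows "summable (\<lambda>k. cc k powr p)"
proof (rule summable_comparison_test)
  have "summable (\<lambda>n. real n powr (-2*p))" using assms by (subst summable_real_powr_iff) auto
  thus "summable (\<lambda>n. real (Suc n) powr (-2*p))"
    using summable_Suc_iff[of "\<lambda>n. real n powr (-2*p)"] by simp
  show "\<exists>N. \<forall>n\<ge>N. norm (cc n powr p) \<le> real (Suc n) powr (-2*p)"
  proof (intro exI allI impI)
    fix n :: nat
    have "cc n \<le> real (Suc n) powr (-2)"
    proof -
      have "2 * (real (Suc n) * real (Suc n)) \<le> (2*real n+1)*(2*real n+3)"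
        by (simp add: algebra_simps)
      hence "2 / ((2*real n+1)*(2*real n+3)) \<le> 1 / (real (Suc n) * real (Suc n))"
        by (simp add: divide_simps add_pos_pos)
      moreover have "real (Suc n) powr (-2) = 1 / (real (Suc n) * real (Suc n))"
        by (simp add: powr_minus powr_realpow[symmetric] power2_eq_square divide_inverse inverse_mult_distrib del: of_nat_Suc)
      ultimately show ?thesis by (simp add: cc_def)
    qed
    hence "cc n powr p \<le> (real (Suc n) powr (-2)) powr p"
      using cc_pos assms by (intro powr_mono2) (auto intro: less_imp_le)
    thus "norm (cc n powr p) \<le> real (Suc n) powr (-2*p)"
      by (simp add: powr_powr)
  qed
qed



definition avg :: "(int \<Rightarrow> real) \<Rightarrow> int \<Rightarrow> nat \<Rightarrow> real" where
  "avg f n r = (\<Sum>k\<in>{- int r..int r}. \<bar>f (n + k)\<bar>) / (2 * real r + 1)"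

lemma maxfun_avg: "maxfun f n = (SUP r. avg f n r)"
  by (simp add: maxfun_def avg_def)

lemma sum_shift: "(\<Sum>k\<in>{- int r..int r}. h (n + k)) = (\<Sum>m\<in>{n - int r..n + int r}. h m)"
  by (rule sum.reindex_bij_witness[of "{- int r..int r}" "\<lambda>m. m - n" "\<lambda>k. n + k" "{n - int r..n + int r}"]) auto

lemma avg_alt: "avg f n r = (\<Sum>m\<in>{n - int r..n + int r}. \<bar>f m\<bar>) / (2 * real r + 1)"
  by (simp add: avg_def sum_shift[of "\<lambda>m. \<bar>f m\<bar>"])

lemma avg_le:
  assumes "\<And>m. \<bar>f m\<bar> \<le> B"
  shows "avg f n r \<le> B"
proof -
  have "(\<Sum>m\<in>{n - int r..n + int r}. \<bar>f m\<bar>) \<le> of_nat (card {n - int r..n + int r}) * B"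
    by (rule sum_bounded_above) (use assms in auto)
  also have "card {n - int r..n + int r} = 2 * r + 1" by simp
  finally have h: "(\<Sum>m\<in>{n - int r..n + int r}. \<bar>f m\<bar>) \<le> of_nat (2 * r + 1) * B" .
  have "(\<Sum>m\<in>{n - int r..n + int r}. \<bar>f m\<bar>) \<le> B * (2 * real r + 1)" using h by (auto simp: algebra_simps)
  thus ?thesis by (simp add: avg_alt pos_divide_le_eq add_pos_pos)
qed

lemma avg_nonneg: "0 \<le> avg f n r"
  by (simp add: avg_def sum_nonneg)

lemma bdd_avg:
  assumes "\<And>m. \<bar>f m\<bar> \<le> B"
  shows "bdd_above (range (avg f n))"
  by (rule bdd_aboveI[where M=B]) (use avg_le[of f B n] assms in auto)

lemma lp_bound:
  assumes "in_lp p f" "0 < p"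
  shows "\<bar>f m\<bar> \<le> (\<Sum>\<^sub>\<infinity>n. \<bar>f n\<bar> powr p) powr (1/p)"
proof -
  have "infsum (\<lambda>n. \<bar>f n\<bar> powr p) {m} \<le> (\<Sum>\<^sub>\<infinity>n. \<bar>f n\<bar> powr p)"
    by (rule infsum_mono_neutral) (use assms in \<open>auto simp: in_lp_def\<close>)
  hence "\<bar>f m\<bar> powr p \<le> (\<Sum>\<^sub>\<infinity>n. \<bar>f n\<bar> powr p)" by simp
  hence "(\<bar>f m\<bar> powr p) powr (1/p) \<le> (\<Sum>\<^sub>\<infinity>n. \<bar>f n\<bar> powr p) powr (1/p)"
    using assms by (intro powr_mono2) auto
  thus ?thesis using assms by (simp add: powr_powr)
qed

lemma asc:
  assumes "bdd_above (range (avg f n))"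
  shows "avg f (n+1) r \<le> maxfun f n + cc r * (\<Sum>m\<in>{n + 1 - int r..n + 1 + int r}. \<bar>f m\<bar>)"
proof -
  define S where "S = (\<Sum>m\<in>{n + 1 - int r..n + 1 + int r}. \<bar>f m\<bar>)"
  have "S \<le> (\<Sum>m\<in>{n - int (Suc r)..n + int (Suc r)}. \<bar>f m\<bar>)"
    unfolding S_def by (rule sum_mono2) auto
  hence "S / (2 * real r + 3) \<le> avg f n (Suc r)"
    by (simp add: avg_alt divide_right_mono add.commute add.left_commute)
  also have "\<dots> \<le> maxfun f n"
    unfolding maxfun_avg by (rule cSUP_upper) (use assms in auto)
  finally have 1: "S / (2 * real r + 3) \<le> maxfun f n" .
  have "avg f (n+1) r = S / (2 * real r + 1)" by (simp add: avg_alt S_def)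
  also have "\<dots> = S / (2 * real r + 3) + cc r * S"
    by (simp add: cc_diff[symmetric] right_diff_distrib mult.commute)
  finally show ?thesis using 1 by (simp add: S_def)
qed

lemma desc:
  assumes "bdd_above (range (avg f (n+1)))"
  shows "avg f n r \<le> maxfun f (n+1) + cc r * (\<Sum>m\<in>{n - int r..n + int r}. \<bar>f m\<bar>)"
proof -
  define S where "S = (\<Sum>m\<in>{n - int r..n + int r}. \<bar>f m\<bar>)"
  have "S \<le> (\<Sum>m\<in>{n + 1 - int (Suc r)..n + 1 + int (Suc r)}. \<bar>f m\<bar>)"
    unfolding S_def by (rule sum_mono2) auto
  hence "S / (2 * real r + 3) \<le> avg f (n+1) (Suc r)"
    by (simp add: avg_alt divide_right_mono add.commute add.left_commute)
  also have "\<dots> \<le> maxfun f (n+1)"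
    unfolding maxfun_avg by (rule cSUP_upper) (use assms in auto)
  finally have 1: "S / (2 * real r + 3) \<le> maxfun f (n+1)" .
  have "avg f n r = S / (2 * real r + 1)" by (simp add: avg_alt S_def)
  also have "\<dots> = S / (2 * real r + 3) + cc r * S"
    by (simp add: cc_diff[symmetric] right_diff_distrib mult.commute)
  finally show ?thesis using 1 by (simp add: S_def)
qed

definition gam :: "real \<Rightarrow> (int \<Rightarrow> real) \<Rightarrow> int \<Rightarrow> int \<Rightarrow> real" where
  "gam p f n m0 = (cc (dd (n - m0)) powr p - cc (Suc (dd (n - m0))) powr p) * \<bar>f m0\<bar> powr p"

lemma gam_nonneg: assumes "0 < p" shows "0 \<le> gam p f n m0"
proof -
  have "cc (Suc (dd (n - m0))) powr p \<le> cc (dd (n - m0)) powr p"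
    by (rule powr_mono2) (use assms cc_mono[of "dd (n - m0)" "Suc (dd (n - m0))"] cc_pos[of "Suc (dd (n - m0))"] in auto)
  thus ?thesis unfolding gam_def by (intro mult_nonneg_nonneg) auto
qed

lemma gam_pos: assumes "0 < p" "f m0 \<noteq> 0" shows "0 < gam p f n m0"
proof -
  have "cc (Suc (dd (n - m0))) powr p < cc (dd (n - m0)) powr p"
    by (rule powr_less_mono2) (use assms cc_strict[of "dd (n - m0)" "Suc (dd (n - m0))"] cc_pos[of "Suc (dd (n - m0))"] in auto)
  thus ?thesis unfolding gam_def using assms by (intro mult_pos_pos) auto
qed

lemma ball_bound:
  fixes p :: real
  assumes p: "0 < p" "p \<le> 1"
    and summ: "(\<lambda>m. ww p (n - m) * \<bar>f m\<bar> powr p) summable_on UNIV"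
    and K: "finite K" "\<And>m. m \<in> K \<Longrightarrow> dd (n - m) \<le> r"
      "\<And>m. m \<in> K \<Longrightarrow> m \<noteq> q \<Longrightarrow> dd (n - m) < r"
    and m0: "m0 \<noteq> q"
  shows "(cc r * sum (\<lambda>m. \<bar>f m\<bar>) K) powr p + gam p f n m0
          \<le> (\<Sum>\<^sub>\<infinity>m. ww p (n - m) * \<bar>f m\<bar> powr p)"
proof -
  define T where "T m = ww p (n - m) * \<bar>f m\<bar> powr p" for m
  have Tnn: "0 \<le> T m" for m by (simp add: T_def ww_nonneg)
  have ccp: "cc r powr p \<le> cc (dd (n - m)) powr p" if "m \<in> K" for m
    using cc_mono[OF K(2)[OF that]] cc_pos p by (intro powr_mono2) (auto intro: less_imp_le)
  have le: "cc r powr p * \<bar>f m\<bar> powr p \<le> T m" if "m \<in> K" for m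
    unfolding T_def ww_def using ccp[OF that] by (intro mult_right_mono) auto
  have "(cc r * sum (\<lambda>m. \<bar>f m\<bar>) K) powr p = (\<Sum>m\<in>K. cc r * \<bar>f m\<bar>) powr p"
    by (simp add: sum_distrib_left)
  also have "\<dots> \<le> (\<Sum>m\<in>K. (cc r * \<bar>f m\<bar>) powr p)"
    by (rule powr_sum_le) (use p K cc_pos[of r] in \<open>auto intro: less_imp_le mult_nonneg_nonneg\<close>)
  also have "\<dots> = (\<Sum>m\<in>K. cc r powr p * \<bar>f m\<bar> powr p)"
    using cc_pos by (simp add: powr_mult less_imp_le)
  finally have 1: "(cc r * sum (\<lambda>m. \<bar>f m\<bar>) K) powr p \<le> (\<Sum>m\<in>K. cc r powr p * \<bar>f m\<bar> powr p)" .
  have 2: "(\<Sum>m\<in>K. cc r powr p * \<bar>f m\<bar> powr p) + gam p f n m0 \<le> sum T (K \<union> {m0})"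
  proof (cases "m0 \<in> K")
    case True
    have d: "dd (n - m0) < r" using K(3)[OF True m0] .
    have "cc r powr p \<le> cc (Suc (dd (n - m0))) powr p"
      using cc_mono[of "Suc (dd (n - m0))" r] d cc_pos p by (intro powr_mono2) (auto intro: less_imp_le)
    hence g: "cc r powr p * \<bar>f m0\<bar> powr p + gam p f n m0 \<le> T m0"
      unfolding gam_def T_def ww_def
      by (metis add.commute diff_add_cancel distrib_right mult_right_mono powr_ge_zero add_le_cancel_left)
    have "(\<Sum>m\<in>K. cc r powr p * \<bar>f m\<bar> powr p) = cc r powr p * \<bar>f m0\<bar> powr p + (\<Sum>m\<in>K - {m0}. cc r powr p * \<bar>f m\<bar> powr p)"
      using True K(1) by (simp add: sum.remove)
    also have "(\<Sum>m\<in>K - {m0}. cc r powr p * \<bar>f m\<bar> powr p) \<le> sum T (K - {m0})"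
      by (rule sum_mono) (use le in auto)
    moreover have "sum T (K \<union> {m0}) = T m0 + sum T (K - {m0})"
      using True K(1) by (simp add: insert_absorb sum.remove)
    ultimately show ?thesis using g by linarith
  next
    case False
    have "(\<Sum>m\<in>K. cc r powr p * \<bar>f m\<bar> powr p) \<le> sum T K"
      by (rule sum_mono) (use le in auto)
    moreover have "gam p f n m0 \<le> T m0"
      unfolding gam_def T_def ww_def by (intro mult_right_mono) auto
    moreover have "sum T (K \<union> {m0}) = T m0 + sum T K"
      using False K(1) by simp
    ultimately show ?thesis by linarith
  qed
  have 3: "sum T (K \<union> {m0}) \<le> infsum T UNIV"
  proof -
    have "infsum T (K \<union> {m0}) \<le> infsum T UNIV"
      by (rule infsum_mono_neutral) (use K(1) summ Tnn in \<open>auto simp: T_def[abs_def]\<close>)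
    thus ?thesis using K(1) by simp
  qed
  show ?thesis using 1 2 3 unfolding T_def by linarith
qed

lemma edge:
  fixes p :: real
  assumes p: "0 < p" "p \<le> 1"
    and summ: "(\<lambda>m. ww p (n - m) * \<bar>f m\<bar> powr p) summable_on UNIV"
    and b0: "bdd_above (range (avg f n))" and b1: "bdd_above (range (avg f (n+1)))"
    and G: "\<And>q. \<exists>m0. m0 \<noteq> q \<and> G \<le> gam p f n m0"
  shows "\<bar>maxfun f (n+1) - maxfun f n\<bar> powr p \<le> (\<Sum>\<^sub>\<infinity>m. ww p (n - m) * \<bar>f m\<bar> powr p) - G"
proof -
  define D where "D = (\<Sum>\<^sub>\<infinity>m. ww p (n - m) * \<bar>f m\<bar> powr p) - G"
  define X where "X = D powr (1/p)"
  have key: "x \<le> X" if "x powr p \<le> D" "0 \<le> x" for x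
  proof -
    have "(x powr p) powr (1/p) \<le> D powr (1/p)"
      using that p by (intro powr_mono2) auto
    thus ?thesis using that p by (simp add: powr_powr X_def)
  qed
  have D0: "0 \<le> D"
  proof -
    obtain m0 where "m0 \<noteq> 0" "G \<le> gam p f n m0" using G by blast
    from ball_bound[OF p summ, of "{}" 0 0 m0] this
    show ?thesis by (simp add: D_def)
  qed
  have up: "maxfun f (n+1) \<le> maxfun f n + X"
    unfolding maxfun_avg[of f "n+1"]
  proof (rule cSUP_least)
    fix r
    define x where "x = cc r * (\<Sum>m\<in>{n + 1 - int r..n + 1 + int r}. \<bar>f m\<bar>)"
    have x0: "0 \<le> x" unfolding x_def using cc_pos by (intro mult_nonneg_nonneg sum_nonneg) (auto intro: less_imp_le)
    obtain m0 where m0: "m0 \<noteq> n + 1 + int r" "G \<le> gam p f n m0" using G by blast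
    have "x powr p + gam p f n m0 \<le> (\<Sum>\<^sub>\<infinity>m. ww p (n - m) * \<bar>f m\<bar> powr p)"
      unfolding x_def
      by (rule ball_bound[OF p summ _ _ _ m0(1)]) (auto simp: dd_def)
    hence "x powr p \<le> D" using m0 by (simp add: D_def)
    hence "x \<le> X" using key x0 by blast
    thus "avg f (n + 1) r \<le> maxfun f n + X" using asc[OF b0, of r] by (simp add: x_def)
  qed simp
  have down: "maxfun f n \<le> maxfun f (n+1) + X"
    unfolding maxfun_avg[of f n]
  proof (rule cSUP_least)
    fix r
    define x where "x = cc r * (\<Sum>m\<in>{n - int r..n + int r}. \<bar>f m\<bar>)"
    have x0: "0 \<le> x" unfolding x_def using cc_pos by (intro mult_nonneg_nonneg sum_nonneg) (auto intro: less_imp_le)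
    obtain m0 where m0: "m0 \<noteq> n - int r" "G \<le> gam p f n m0" using G by blast
    have "x powr p + gam p f n m0 \<le> (\<Sum>\<^sub>\<infinity>m. ww p (n - m) * \<bar>f m\<bar> powr p)"
      unfolding x_def
      by (rule ball_bound[OF p summ _ _ _ m0(1)]) (auto simp: dd_def)
    hence "x powr p \<le> D" using m0 by (simp add: D_def)
    hence "x \<le> X" using key x0 by blast
    thus "avg f n r \<le> maxfun f (n+1) + X" using desc[OF b1, of r] by (simp add: x_def)
  qed simp
  have "\<bar>maxfun f (n+1) - maxfun f n\<bar> \<le> X" using up down by linarith
  hence "\<bar>maxfun f (n+1) - maxfun f n\<bar> powr p \<le> X powr p"
    using p by (intro powr_mono2) auto
  also have "X powr p = D" using D0 p by (simp add: X_def powr_powr)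
  finally show ?thesis by (simp add: D_def)
qed



lemma double:
  fixes p :: real
  assumes p: "0 < p" and lp: "in_lp p f" and s: "summable (\<lambda>k. cc k powr p)"
  shows "\<And>n. (\<lambda>m. ww p (n - m) * \<bar>f m\<bar> powr p) summable_on UNIV"
    and "(\<lambda>n. \<Sum>\<^sub>\<infinity>m. ww p (n - m) * \<bar>f m\<bar> powr p) summable_on UNIV"
    and "(\<Sum>\<^sub>\<infinity>n. \<Sum>\<^sub>\<infinity>m. ww p (n - m) * \<bar>f m\<bar> powr p)
           = 2 * suminf (\<lambda>k. cc k powr p) * (\<Sum>\<^sub>\<infinity>m. \<bar>f m\<bar> powr p)"
proof -
  define T where "T = (\<lambda>n m. ww p (n - m) * \<bar>f m\<bar> powr p)"
  define W where "W = 2 * suminf (\<lambda>k. cc k powr p)"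
  have hw: "(ww p has_sum W) UNIV" using ww_has_sum[OF s] by (simp add: W_def)
  have Tnn: "0 \<le> T n m" for n m by (simp add: T_def ww_nonneg)
  have fs: "(\<lambda>m. \<bar>f m\<bar> powr p) summable_on UNIV" using lp by (simp add: in_lp_def)
  have inner: "T n summable_on UNIV" for n
  proof (rule summable_on_comparison_test[OF fs])
    fix m
    show "T n m \<le> \<bar>f m\<bar> powr p" unfolding T_def
      using ww_le1[OF p, of "n - m"] by (intro mult_left_le_one_le) (auto simp: ww_nonneg)
    show "0 \<le> T n m" by (rule Tnn)
  qed
  have h1: "((\<lambda>n. T n m) has_sum W * \<bar>f m\<bar> powr p) UNIV" for m
  proof -
    have "((\<lambda>n. ww p (n - m)) has_sum W) UNIV" using hw shift_has_sum by blast
    thus ?thesis unfolding T_def by (rule has_sum_cmult_left)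
  qed
  have abs1: "(\<lambda>(m, n). T n m) summable_on (UNIV \<times> UNIV)"
  proof -
    have "(\<lambda>x. norm ((\<lambda>(m, n). T n m) x)) summable_on (Sigma UNIV (\<lambda>_. UNIV))"
    proof (rule iffD2[OF Infinite_Sum.abs_summable_on_Sigma_iff], intro conjI ballI)
      fix m :: int
      show "(\<lambda>n. norm ((\<lambda>(m, n). T n m) (m, n))) summable_on UNIV"
        using h1[of m] Tnn by (auto simp: summable_on_def)
      show "(\<lambda>m. norm (\<Sum>\<^sub>\<infinity>n\<in>UNIV. norm ((\<lambda>(m, n). T n m) (m, n)))) summable_on UNIV"
      proof -
        have eqm: "(\<Sum>\<^sub>\<infinity>n. \<bar>T n m\<bar>) = W * \<bar>f m\<bar> powr p" for m
          using h1[of m] Tnn by (auto simp: infsumI)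
        have W0: "W \<ge> 0" using hw has_sum_nonneg ww_nonneg by blast
        have "(\<lambda>m. W * \<bar>f m\<bar> powr p) summable_on UNIV"
          by (rule summable_on_cmult_right[OF fs])
        thus ?thesis by (simp add: eqm abs_mult W0)
      qed
    qed
    thus ?thesis using summable_on_iff_abs_summable_on_real by blast
  qed
  have abs2: "(\<lambda>(n, m). T n m) summable_on (UNIV \<times> UNIV)"
    using abs1 summable_on_swap[of "\<lambda>(m, n). T n m" UNIV UNIV] by (simp add: case_prod_beta)
  show "(\<lambda>m. ww p (n - m) * \<bar>f m\<bar> powr p) summable_on UNIV" for n
    using inner[of n] by (simp add: T_def)
  have "(\<lambda>n. infsum (T n) UNIV) summable_on UNIV"
    using summable_on_Sigma_banach[of "\<lambda>n m. T n m" UNIV "\<lambda>_. UNIV"] abs2 by simp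
  thus "(\<lambda>n. \<Sum>\<^sub>\<infinity>m. ww p (n - m) * \<bar>f m\<bar> powr p) summable_on UNIV" by (simp add: T_def)
  have "infsum (\<lambda>n. infsum (T n) UNIV) UNIV = infsum (\<lambda>m. infsum (\<lambda>n. T n m) UNIV) UNIV"
    using infsum_swap_banach[of "\<lambda>n m. T n m" UNIV UNIV] abs2 by simp
  also have "\<dots> = infsum (\<lambda>m. W * \<bar>f m\<bar> powr p) UNIV"
    by (rule infsum_cong) (use h1 in \<open>simp add: infsumI\<close>)
  also have "\<dots> = W * (\<Sum>\<^sub>\<infinity>m. \<bar>f m\<bar> powr p)"
    by (rule infsum_cmult_right) (use fs in auto)
  finally show "(\<Sum>\<^sub>\<infinity>n. \<Sum>\<^sub>\<infinity>m. ww p (n - m) * \<bar>f m\<bar> powr p)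
           = 2 * suminf (\<lambda>k. cc k powr p) * (\<Sum>\<^sub>\<infinity>m. \<bar>f m\<bar> powr p)" by (simp add: W_def T_def)
qed

lemma main_bound:
  fixes p :: real
  assumes p: "0 < p" "p \<le> 1" and lp: "in_lp p f" and s: "summable (\<lambda>k. cc k powr p)"
    and G: "\<And>q. \<exists>m0. m0 \<noteq> q \<and> G \<le> gam p f n0 m0"
  shows "(\<lambda>n. \<bar>maxfun f (n+1) - maxfun f n\<bar> powr p) summable_on UNIV"
    and "(\<Sum>\<^sub>\<infinity>n. \<bar>maxfun f (n+1) - maxfun f n\<bar> powr p)
          \<le> 2 * suminf (\<lambda>k. cc k powr p) * (\<Sum>\<^sub>\<infinity>m. \<bar>f m\<bar> powr p)"
    and "0 < G \<Longrightarrow> (\<Sum>\<^sub>\<infinity>n. \<bar>maxfun f (n+1) - maxfun f n\<bar> powr p)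
          < 2 * suminf (\<lambda>k. cc k powr p) * (\<Sum>\<^sub>\<infinity>m. \<bar>f m\<bar> powr p)"
proof -
  define D where "D n = (\<Sum>\<^sub>\<infinity>m. ww p (n - m) * \<bar>f m\<bar> powr p)" for n
  define V where "V n = \<bar>maxfun f (n+1) - maxfun f n\<bar> powr p" for n
  note dbl = double[OF p(1) lp s]
  have Ds: "D summable_on UNIV" using dbl(2) by (simp add: D_def[abs_def])
  have Dsum: "infsum D UNIV = 2 * suminf (\<lambda>k. cc k powr p) * (\<Sum>\<^sub>\<infinity>m. \<bar>f m\<bar> powr p)"
    using dbl(3) by (simp add: D_def[abs_def])
  define B where "B = (\<Sum>\<^sub>\<infinity>n. \<bar>f n\<bar> powr p) powr (1/p)"
  have fb: "\<And>m. \<bar>f m\<bar> \<le> B" unfolding B_def by (rule lp_bound[OF lp p(1)])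
  have bdd: "bdd_above (range (avg f n))" for n by (rule bdd_avg[OF fb])
  have Vle: "V n \<le> D n - (if n = n0 then G else 0)" for n
  proof (cases "n = n0")
    case True
    show ?thesis using edge[OF p _ bdd bdd G] dbl(1) True
      by (simp add: V_def D_def)
  next
    case False
    have G0: "\<exists>m0. m0 \<noteq> q \<and> 0 \<le> gam p f n m0" for q
      using gam_nonneg[OF p(1)] by (intro exI[of _ "q+1"]) auto
    show ?thesis using edge[OF p _ bdd bdd G0] dbl(1) False
      by (simp add: V_def D_def)
  qed
  have G0': "0 \<le> G \<or> True" by simp
  have Vnn: "0 \<le> V n" for n by (simp add: V_def)
  have VD: "V n \<le> D n" for n
  proof -
    have G0: "\<exists>m0. m0 \<noteq> q \<and> 0 \<le> gam p f n m0" for q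
      using gam_nonneg[OF p(1)] by (intro exI[of _ "q+1"]) auto
    show ?thesis using edge[OF p _ bdd bdd G0] dbl(1)
      by (simp add: V_def D_def)
  qed
  show Vs: "(\<lambda>n. \<bar>maxfun f (n+1) - maxfun f n\<bar> powr p) summable_on UNIV"
    using summable_on_comparison_test[where f=D and g=V and A=UNIV] Ds VD Vnn by (simp add: V_def[abs_def])
  have "infsum V UNIV \<le> infsum D UNIV"
    by (rule infsum_mono) (use Vs Ds VD in \<open>auto simp: V_def[abs_def]\<close>)
  thus "(\<Sum>\<^sub>\<infinity>n. \<bar>maxfun f (n+1) - maxfun f n\<bar> powr p)
          \<le> 2 * suminf (\<lambda>k. cc k powr p) * (\<Sum>\<^sub>\<infinity>m. \<bar>f m\<bar> powr p)"
    using Dsum by (simp add: V_def[abs_def])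
  assume G0: "0 < G"
  have "infsum V UNIV < infsum D UNIV"
  proof (rule has_sum_strict_mono)
    show "(V has_sum infsum V UNIV) UNIV" using Vs by (simp add: V_def[abs_def])
    show "(D has_sum infsum D UNIV) UNIV" using Ds by simp
    show "V x \<le> D x" for x by (rule VD)
    show "n0 \<in> UNIV" by simp
    show "V n0 < D n0" using Vle[of n0] G0 by simp
  qed
  thus "(\<Sum>\<^sub>\<infinity>n. \<bar>maxfun f (n+1) - maxfun f n\<bar> powr p)
          < 2 * suminf (\<lambda>k. cc k powr p) * (\<Sum>\<^sub>\<infinity>m. \<bar>f m\<bar> powr p)"
    using Dsum by (simp add: V_def[abs_def])
qed



lemma avg_delta:
  "avg (\<lambda>x. if x = m then c else 0) n r = (if nat \<bar>n - m\<bar> \<le> r then \<bar>c\<bar> else 0) / (2 * real r + 1)"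
proof -
  have "(\<Sum>x\<in>{n - int r..n + int r}. \<bar>if x = m then c else 0\<bar>) = (\<Sum>x\<in>{n - int r..n + int r}. if x = m then \<bar>c\<bar> else 0)"
    by (rule sum.cong) auto
  also have "\<dots> = (if m \<in> {n - int r..n + int r} then \<bar>c\<bar> else 0)" by (simp add: sum.delta)
  also have "\<dots> = (if nat \<bar>n - m\<bar> \<le> r then \<bar>c\<bar> else 0)" by auto
  finally show ?thesis by (simp add: avg_alt)
qed

lemma maxfun_delta:
  "maxfun (\<lambda>x. if x = m then c else 0) n = \<bar>c\<bar> / (2 * real (nat \<bar>n - m\<bar>) + 1)"
proof -
  define e where "e = nat \<bar>n - m\<bar>"
  have b: "bdd_above (range (avg (\<lambda>x. if x = m then c else 0) n))"
    by (rule bdd_avg[where B="\<bar>c\<bar>"]) auto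
  show ?thesis unfolding maxfun_avg e_def[symmetric]
  proof (rule antisym)
    show "(SUP r. avg (\<lambda>x. if x = m then c else 0) n r) \<le> \<bar>c\<bar> / (2 * real e + 1)"
    proof (rule cSUP_least)
      fix r
      show "avg (\<lambda>x. if x = m then c else 0) n r \<le> \<bar>c\<bar> / (2 * real e + 1)"
        unfolding avg_delta e_def[symmetric]
        by (auto intro!: divide_left_mono add_pos_pos)
    qed simp
    have "\<bar>c\<bar> / (2 * real e + 1) = avg (\<lambda>x. if x = m then c else 0) n e"
      by (simp add: avg_delta e_def)
    also have "\<dots> \<le> (SUP r. avg (\<lambda>x. if x = m then c else 0) n r)"
      by (rule cSUP_upper[OF _ b]) simp
    finally show "\<bar>c\<bar> / (2 * real e + 1) \<le> (SUP r. avg (\<lambda>x. if x = m then c else 0) n r)" .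
  qed
qed

lemma diff_delta:
  "\<bar>maxfun (\<lambda>x. if x = m then c else 0) (n+1) - maxfun (\<lambda>x. if x = m then c else 0) n\<bar>
     = \<bar>c\<bar> * cc (dd (n - m))"
proof (cases "0 \<le> n - m")
  case True
  define d where "d = nat (n - m)"
  have e1: "nat \<bar>n + 1 - m\<bar> = Suc d" and e0: "nat \<bar>n - m\<bar> = d" using True by (auto simp: d_def)
  have "\<bar>c\<bar> / (2 * real (Suc d) + 1) \<le> \<bar>c\<bar> / (2 * real d + 1)"
    by (rule divide_left_mono) auto
  moreover have "\<bar>c\<bar> / (2 * real d + 1) - \<bar>c\<bar> / (2 * real (Suc d) + 1) = \<bar>c\<bar> * cc d"
  proof -
    have "\<bar>c\<bar> / (2 * real d + 1) - \<bar>c\<bar> / (2 * real (Suc d) + 1) = \<bar>c\<bar> * (1 / (2 * real d + 1) - 1 / (2 * real d + 3))"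
      by (simp add: right_diff_distrib add.commute add.left_commute)
    thus ?thesis by (simp add: cc_diff)
  qed
  ultimately show ?thesis using True by (simp add: maxfun_delta e1 e0 dd_def d_def)
next
  case False
  define d where "d = nat (m - n - 1)"
  have e1: "nat \<bar>n + 1 - m\<bar> = d" and e0: "nat \<bar>n - m\<bar> = Suc d" using False by (auto simp: d_def)
  have "\<bar>c\<bar> / (2 * real (Suc d) + 1) \<le> \<bar>c\<bar> / (2 * real d + 1)"
    by (rule divide_left_mono) auto
  moreover have "\<bar>c\<bar> / (2 * real d + 1) - \<bar>c\<bar> / (2 * real (Suc d) + 1) = \<bar>c\<bar> * cc d"
  proof -
    have "\<bar>c\<bar> / (2 * real d + 1) - \<bar>c\<bar> / (2 * real (Suc d) + 1) = \<bar>c\<bar> * (1 / (2 * real d + 1) - 1 / (2 * real d + 3))"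
      by (simp add: right_diff_distrib add.commute add.left_commute)
    thus ?thesis by (simp add: cc_diff)
  qed
  moreover have "dd (n - m) = d" using False by (simp add: dd_def d_def)
  ultimately show ?thesis by (simp add: maxfun_delta e1 e0)
qed

lemma lp_delta:
  fixes c p :: real
  shows "((\<lambda>n. \<bar>if n = m then c else 0\<bar> powr p) has_sum \<bar>c\<bar> powr p) UNIV"
proof -
  have "((\<lambda>n. \<bar>if n = m then c else 0\<bar> powr p) has_sum \<bar>c\<bar> powr p) UNIV
        \<longleftrightarrow> ((\<lambda>n. \<bar>if n = m then c else 0\<bar> powr p) has_sum \<bar>c\<bar> powr p) {m}"
    by (rule has_sum_cong_neutral) auto
  moreover have "((\<lambda>n. \<bar>if n = m then c else 0\<bar> powr p) has_sum \<bar>c\<bar> powr p) {m}"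
    by (rule has_sum_finiteI) auto
  ultimately show ?thesis by blast
qed

lemma in_lp_delta: fixes c :: real shows "in_lp p (\<lambda>n. if n = m then c else 0)"
  unfolding in_lp_def summable_on_def using lp_delta[of m c p] by blast

lemma lpnorm_delta: fixes c :: real shows "0 < p \<Longrightarrow> lpnorm p (\<lambda>n. if n = m then c else 0) = \<bar>c\<bar>"
  unfolding lpnorm_def using lp_delta[of m c p] by (simp add: infsumI powr_powr)

lemma varp_delta:
  assumes p: "0 < p" and c: "c \<noteq> 0"
  shows "varp p (maxfun (\<lambda>x. if x = m then c else 0)) = Cp p * ereal \<bar>c\<bar>"
proof -
  define g where "g = maxfun (\<lambda>x. if x = m then c else 0)"
  have V: "\<bar>g (n + 1) - g n\<bar> powr p = \<bar>c\<bar> powr p * ww p (n - m)" for n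
    unfolding g_def diff_delta ww_def using cc_pos by (simp add: powr_mult less_imp_le)
  show ?thesis
  proof (cases "summable (\<lambda>k. cc k powr p)")
    case True
    define W where "W = 2 * suminf (\<lambda>k. cc k powr p)"
    have hw: "(ww p has_sum W) UNIV" using ww_has_sum[OF True] by (simp add: W_def)
    have W0: "0 \<le> W" using hw has_sum_nonneg ww_nonneg by blast
    have "((\<lambda>n. ww p (n - m)) has_sum W) UNIV" using hw shift_has_sum by blast
    hence hv: "((\<lambda>n. \<bar>g (n + 1) - g n\<bar> powr p) has_sum \<bar>c\<bar> powr p * W) UNIV"
      unfolding V by (rule has_sum_cmult_right)
    have "varp p g = ereal ((\<bar>c\<bar> powr p * W) powr (1/p))"
      unfolding varp_def using hv by (auto simp: summable_on_def infsumI)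
    also have "(\<bar>c\<bar> powr p * W) powr (1/p) = \<bar>c\<bar> * W powr (1/p)"
      using p W0 by (simp add: powr_mult powr_powr)
    finally show ?thesis using True p by (simp add: g_def Cp_eq W_def mult.commute)
  next
    case False
    have "\<not> (\<lambda>n. \<bar>g (n + 1) - g n\<bar> powr p) summable_on UNIV"
    proof
      assume "(\<lambda>n. \<bar>g (n + 1) - g n\<bar> powr p) summable_on UNIV"
      hence "(\<lambda>n. \<bar>c\<bar> powr p * ww p (n - m)) summable_on UNIV" unfolding V .
      hence "(\<lambda>n. ww p (n - m)) summable_on UNIV"
        using summable_on_cmult_right'[of "\<bar>c\<bar> powr p" "\<lambda>n. ww p (n - m)" UNIV] c by simp
      hence "ww p summable_on UNIV" using shift_has_sum unfolding summable_on_def by blast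
      thus False using ww_summable_imp False by blast
    qed
    hence "varp p g = \<infinity>" by (simp add: varp_def)
    thus ?thesis using False c by (simp add: g_def Cp_eq)
  qed
qed



lemma lpnorm_nonneg: "0 \<le> lpnorm p f" by (simp add: lpnorm_def)

lemma maxfun_zero: "maxfun (\<lambda>_. 0) = (\<lambda>_. 0)"
  by (simp add: maxfun_def fun_eq_iff)

lemma varp_zero: "varp p (\<lambda>_. 0) = 0"
  by (simp add: varp_def)

lemma part1:
  fixes p :: real
  assumes p: "0 < p" "p \<le> 1" and lp: "in_lp p f"
  shows "varp p (maxfun f) \<le> Cp p * ereal (lpnorm p f)"
proof (cases "summable (\<lambda>k. cc k powr p)")
  case True
  define W where "W = 2 * suminf (\<lambda>k. cc k powr p)"
  define N where "N = (\<Sum>\<^sub>\<infinity>m. \<bar>f m\<bar> powr p)"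
  define S where "S = (\<Sum>\<^sub>\<infinity>n. \<bar>maxfun f (n+1) - maxfun f n\<bar> powr p)"
  have G: "\<exists>m0. m0 \<noteq> q \<and> 0 \<le> gam p f 0 m0" for q
    using gam_nonneg[OF p(1)] by (intro exI[of _ "q+1"]) auto
  note mb = main_bound[OF p lp True G]
  have W0: "0 \<le> W" using ww_has_sum[OF True] has_sum_nonneg ww_nonneg unfolding W_def by blast
  have N0: "0 \<le> N" unfolding N_def by (rule infsum_nonneg) auto
  have S0: "0 \<le> S" unfolding S_def by (rule infsum_nonneg) auto
  have "varp p (maxfun f) = ereal (S powr (1/p))"
    using mb(1) by (simp add: varp_def S_def)
  also have "S powr (1/p) \<le> (W * N) powr (1/p)"
    using mb(2) S0 p by (intro powr_mono2) (auto simp: S_def W_def N_def)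
  also have "(W * N) powr (1/p) = W powr (1/p) * N powr (1/p)"
    using W0 N0 by (simp add: powr_mult)
  finally show ?thesis using True by (simp add: Cp_eq W_def lpnorm_def N_def)
next
  case False
  hence Cinf: "Cp p = \<infinity>" by (simp add: Cp_eq)
  show ?thesis
  proof (cases "lpnorm p f = 0")
    case False
    hence "0 < lpnorm p f" using lpnorm_nonneg[of p f] by linarith
    thus ?thesis using Cinf by simp
  next
    case True
    hence "(\<Sum>\<^sub>\<infinity>m. \<bar>f m\<bar> powr p) = 0" by (simp add: lpnorm_def)
    hence "\<bar>f m\<bar> powr p = 0" for m
      using lp by (intro nonneg_infsum_le_0D[where A=UNIV]) (auto simp: in_lp_def)
    hence "f = (\<lambda>_. 0)" by (auto simp: fun_eq_iff)
    thus ?thesis using True by (simp add: maxfun_zero varp_zero Cinf zero_ereal_def[symmetric])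
  qed
qed

lemma part3:
  fixes p :: real
  assumes p: "1/2 < p" "p \<le> 1" and lp: "in_lp p f" and nz: "f \<noteq> (\<lambda>_. 0)"
    and eq: "varp p (maxfun f) = Cp p * ereal (lpnorm p f)"
  shows "\<exists>m c. c \<noteq> 0 \<and> f = (\<lambda>n. if n = m then c else 0)"
proof (rule ccontr)
  assume nd: "\<not> ?thesis"
  have p0: "0 < p" using p by simp
  have s: "summable (\<lambda>k. cc k powr p)" by (rule summable_pgt[OF p(1)])
  obtain m1 where m1: "f m1 \<noteq> 0" using nz by auto
  obtain m2 where m2: "m2 \<noteq> m1" "f m2 \<noteq> 0"
  proof (rule ccontr)
    assume "\<not> thesis"
    hence "\<forall>m. m \<noteq> m1 \<longrightarrow> f m = 0" using that by blast
    hence "f = (\<lambda>n. if n = m1 then f m1 else 0)" by auto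
    thus False using nd m1 by blast
  qed
  define G where "G = min (gam p f 0 m1) (gam p f 0 m2)"
  have Gpos: "0 < G" unfolding G_def using gam_pos[OF p0] m1 m2 by simp
  have Gc: "\<exists>m0. m0 \<noteq> q \<and> G \<le> gam p f 0 m0" for q
    by (rule exI[of _ "if q = m1 then m2 else m1"]) (use m2 in \<open>auto simp: G_def\<close>)
  note mb = main_bound[OF p0 p(2) lp s Gc]
  define W where "W = 2 * suminf (\<lambda>k. cc k powr p)"
  define N where "N = (\<Sum>\<^sub>\<infinity>m. \<bar>f m\<bar> powr p)"
  define S where "S = (\<Sum>\<^sub>\<infinity>n. \<bar>maxfun f (n+1) - maxfun f n\<bar> powr p)"
  have W0: "0 \<le> W" using ww_has_sum[OF s] has_sum_nonneg ww_nonneg unfolding W_def by blast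
  have N0: "0 \<le> N" unfolding N_def by (rule infsum_nonneg) auto
  have S0: "0 \<le> S" unfolding S_def by (rule infsum_nonneg) auto
  have "varp p (maxfun f) = ereal (S powr (1/p))"
    using mb(1) by (simp add: varp_def S_def)
  moreover have "S powr (1/p) < (W * N) powr (1/p)"
    using mb(3)[OF Gpos] S0 p0 by (intro powr_less_mono2) (auto simp: S_def W_def N_def)
  moreover have "(W * N) powr (1/p) = W powr (1/p) * N powr (1/p)"
    using W0 N0 by (simp add: powr_mult)
  ultimately have "varp p (maxfun f) < Cp p * ereal (lpnorm p f)"
    using s by (simp add: Cp_eq W_def lpnorm_def N_def)
  thus False using eq by simp
qed

theorem theorem5p1:
  fixes p :: real
  assumes "0 < p" and "p \<le> 1"
  shows "(\<forall>f. in_lp p f \<longrightarrow> varp p (maxfun f) \<le> Cp p * ereal (lpnorm p f))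
       \<and> (\<forall>C::real. ereal C < Cp p \<longrightarrow>
            (\<exists>f. in_lp p f \<and> varp p (maxfun f) > ereal C * ereal (lpnorm p f)))
       \<and> (1/2 < p \<longrightarrow> (\<forall>f. in_lp p f \<and> f \<noteq> (\<lambda>_. 0) \<longrightarrow>
            (varp p (maxfun f) = Cp p * ereal (lpnorm p f) \<longleftrightarrow>
             (\<exists>m c. c \<noteq> 0 \<and> f = (\<lambda>n. if n = m then c else 0)))))"
proof (intro conjI allI impI)
  fix f assume "in_lp p f"
  thus "varp p (maxfun f) \<le> Cp p * ereal (lpnorm p f)" using part1 assms by blast
next
  fix C :: real assume C: "ereal C < Cp p"
  define f where "f = (\<lambda>n::int. if n = 0 then (1::real) else 0)"
  have "in_lp p f" unfolding f_def by (rule in_lp_delta)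
  moreover have "lpnorm p f = 1" unfolding f_def using lpnorm_delta[OF assms(1)] by simp
  moreover have "varp p (maxfun f) = Cp p" unfolding f_def using varp_delta[OF assms(1), of "1::real" 0] by simp
  ultimately show "\<exists>f. in_lp p f \<and> varp p (maxfun f) > ereal C * ereal (lpnorm p f)"
    using C by (intro exI[of _ f]) simp
next
  fix f assume h: "1/2 < p" "in_lp p f \<and> f \<noteq> (\<lambda>_. 0)"
  show "varp p (maxfun f) = Cp p * ereal (lpnorm p f) \<longleftrightarrow>
             (\<exists>m c. c \<noteq> 0 \<and> f = (\<lambda>n. if n = m then c else 0))"
  proof
    assume "varp p (maxfun f) = Cp p * ereal (lpnorm p f)"
    thus "\<exists>m c. c \<noteq> 0 \<and> f = (\<lambda>n. if n = m then c else 0)"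
      using part3[OF h(1) assms(2)] h(2) by blast
  next
    assume "\<exists>m c. c \<noteq> 0 \<and> f = (\<lambda>n. if n = m then c else 0)"
    then obtain m c where mc: "c \<noteq> (0::real)" "f = (\<lambda>n. if n = m then c else 0)" by blast
    show "varp p (maxfun f) = Cp p * ereal (lpnorm p f)"
      using varp_delta[OF assms(1) mc(1)] lpnorm_delta[OF assms(1)] mc(2) by simp
  qed
qed

end
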